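(* Assume $\mathrm{char}\,K\ne2$, $\prod_{i=1}^{n-1}(1+q^i)=0$, and $\mathcal H(D_n)$, $\mathcal H(D_{n-1})$ are split over $K$. Let $\lambda\in\mathcal P_n$ with $\lambda=h(\lambda)$. Then there is an $\mathcal H(D_{n-1})$-module isomorphism $$\mathrm{soc}\bigl(D_+^{\lambda}\!\downarrow_{\mathcal H(D_{n-1})}\bigr)\cong\mathrm{soc}\bigl(D_-^{\lambda}\!\downarrow_{\mathcal H(D_{n-1})}\bigr).$$
   Context: $K$ is a field, $q\in K^\times$ (a primitive $2\ell$-th root of unity under the hypotheses). $\mathcal H(B_m)$ is the $K$-algebra with generators $T_0,\dots,T_{m-1}$ and relations $T_0^2=1$; $(T_i+1)(T_i-q)=0$ for $1\le i\le m-1$; $T_0T_1T_0T_1=T_1T_0T_1T_0$; $T_iT_{i+1}T_i=T_{i+1}T_iT_{i+1}$; $T_iT_j=T_jT_i$ for $|i-j|>1$. $\mathcal H(D_m)$ is the subalgebra generated by $T_0T_1T_0,T_1,\dots,T_{m-1}$; $\mathcal H(D_{n-1})\subset\mathcal H(D_n)$ via generators of index $\le n-2$. For a bipartition $\lambda$ of $m$, $\tilde D^\lambda$ is the simple head of the Dipper–James–Mathas Specht module and $\mathcal P_m=\{\lambda:\tilde D^\lambda\ne0\}$. With $\sigma(T_0)=-T_0$, $\sigma(T_i)=T_i$ ($i\ne0$), $h$ is the involution of $\mathcal P_m$ with $(\tilde D^\lambda)^\sigma\cong\tilde D^{h(\lambda)}$. When $\mathcal H(D_n)$ is split and $\lambda=h(\lambda)$,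 $\tilde D^\lambda\!\downarrow_{\mathcal H(D_n)}=D_+^\lambda\oplus D_-^\lambda$ with $D_\pm^\lambda$ non-isomorphic irreducible $\mathcal H(D_n)$-modules. *)

theory Defs
  imports "Jordan_Normal_Form.Matrix"
begin

text \<open>Finite-dimensional representations are given by square matrices over the field:
  a representation of dimension d of an algebra with generators indexed by nat is a map
  rho :: nat => 'k mat, with rho i a d x d matrix for the relevant generators.
  Module = column space carrier_vec d with the matrix action.\<close>

text \<open>Representations of the Hecke algebra H(B_m): generators T_0,...,T_{m-1}.\<close>
definition HB_rep :: "'k::field \<Rightarrow> nat \<Rightarrow> nat \<Rightarrow> (nat \<Rightarrow> 'k mat) \<Rightarrow> bool" where
  "HB_rep q m d \<rho> \<longleftrightarrow>
     (\<forall>i<m. \<rho> i \<in> carrier_mat d d) \<and>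
     (0 < m \<longrightarrow> \<rho> 0 * \<rho> 0 = 1\<^sub>m d) \<and>
     (\<forall>i. 1 \<le> i \<and> i < m \<longrightarrow> (\<rho> i + 1\<^sub>m d) * (\<rho> i - q \<cdot>\<^sub>m 1\<^sub>m d) = 0\<^sub>m d d) \<and>
     (2 \<le> m \<longrightarrow> \<rho> 0 * \<rho> 1 * \<rho> 0 * \<rho> 1 = \<rho> 1 * \<rho> 0 * \<rho> 1 * \<rho> 0) \<and>
     (\<forall>i. 1 \<le> i \<and> i + 1 < m \<longrightarrow>
          \<rho> i * \<rho> (i+1) * \<rho> i = \<rho> (i+1) * \<rho> i * \<rho> (i+1)) \<and>
     (\<forall>i j. i < m \<and> j < m \<and> i + 1 < j \<longrightarrow> \<rho> i * \<rho> j = \<rho> j * \<rho> i)"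

text \<open>The generators of H(D_m) inside H(B_m): index 0 is T_0 T_1 T_0, index i>0 is T_i.\<close>
definition Dgen :: "(nat \<Rightarrow> 'k::field mat) \<Rightarrow> nat \<Rightarrow> 'k mat" where
  "Dgen \<rho> i = (if i = 0 then \<rho> 0 * \<rho> 1 * \<rho> 0 else \<rho> i)"

text \<open>Index set of the generators of H(D_m) (H(D_1) = K has no generators).\<close>
definition Dgens :: "nat \<Rightarrow> nat set" where
  "Dgens m = (if 2 \<le> m then {..<m} else {})"

datatype 'k ncp = Var nat | Cst 'k | Add "'k ncp" "'k ncp" | Mul "'k ncp" "'k ncp"

fun ncp_vars :: "'k ncp \<Rightarrow> nat set" where
  "ncp_vars (Var i) = {i}"
| "ncp_vars (Cst c) = {}"
| "ncp_vars (Add p r) = ncp_vars p \<union> ncp_vars r"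
| "ncp_vars (Mul p r) = ncp_vars p \<union> ncp_vars r"

fun ncp_eval :: "nat \<Rightarrow> (nat \<Rightarrow> 'k::field mat) \<Rightarrow> 'k ncp \<Rightarrow> 'k mat" where
  "ncp_eval d \<rho> (Var i) = \<rho> i"
| "ncp_eval d \<rho> (Cst c) = c \<cdot>\<^sub>m 1\<^sub>m d"
| "ncp_eval d \<rho> (Add p r) = ncp_eval d \<rho> p + ncp_eval d \<rho> r"
| "ncp_eval d \<rho> (Mul p r) = ncp_eval d \<rho> p * ncp_eval d \<rho> r"

text \<open>p is a relation of the subalgebra H(D_m) of H(B_m): p evaluated at the generators
  of H(D_m) vanishes in H(B_m), i.e. in every finite-dimensional H(B_m)-representation
  (equivalently in the faithful regular representation).\<close>
definition HD_relation :: "'k::field \<Rightarrow> nat \<Rightarrow> 'k ncp \<Rightarrow> bool" where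
  "HD_relation q m p \<longleftrightarrow> ncp_vars p \<subseteq> Dgens m \<and>
     (\<forall>d \<rho>. HB_rep q m d \<rho> \<longrightarrow> ncp_eval d (Dgen \<rho>) p = 0\<^sub>m d d)"

definition HD_rep :: "'k::field \<Rightarrow> nat \<Rightarrow> nat \<Rightarrow> (nat \<Rightarrow> 'k mat) \<Rightarrow> bool" where
  "HD_rep q m d \<rho> \<longleftrightarrow> (\<forall>i\<in>Dgens m. \<rho> i \<in> carrier_mat d d) \<and>
     (\<forall>p. HD_relation q m p \<longrightarrow> ncp_eval d \<rho> p = 0\<^sub>m d d)"

definition subspace_vec :: "nat \<Rightarrow> 'k::field vec set \<Rightarrow> bool" where
  "subspace_vec d W \<longleftrightarrow> W \<subseteq> carrier_vec d \<and> 0\<^sub>v d \<in> W \<and>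
     (\<forall>u\<in>W. \<forall>v\<in>W. u + v \<in> W) \<and> (\<forall>c. \<forall>v\<in>W. c \<cdot>\<^sub>v v \<in> W)"

definition invariant :: "nat \<Rightarrow> nat set \<Rightarrow> (nat \<Rightarrow> 'k::field mat) \<Rightarrow> 'k vec set \<Rightarrow> bool" where
  "invariant d G \<rho> W \<longleftrightarrow> subspace_vec d W \<and> (\<forall>i\<in>G. \<forall>v\<in>W. \<rho> i *\<^sub>v v \<in> W)"

definition simple_sub :: "nat \<Rightarrow> nat set \<Rightarrow> (nat \<Rightarrow> 'k::field mat) \<Rightarrow> 'k vec set \<Rightarrow> bool" where
  "simple_sub d G \<rho> W \<longleftrightarrow> invariant d G \<rho> W \<and> W \<noteq> {0\<^sub>v d} \<and>
     (\<forall>U. invariant d G \<rho> U \<and> U \<subseteq> W \<longrightarrow> U = {0\<^sub>v d} \<or> U = W)"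

definition irreducible_rep :: "nat \<Rightarrow> nat set \<Rightarrow> (nat \<Rightarrow> 'k::field mat) \<Rightarrow> bool" where
  "irreducible_rep d G \<rho> \<longleftrightarrow> simple_sub d G \<rho> (carrier_vec d)"

definition socle :: "nat \<Rightarrow> nat set \<Rightarrow> (nat \<Rightarrow> 'k::field mat) \<Rightarrow> 'k vec set \<Rightarrow> 'k vec set" where
  "socle d G \<rho> W = \<Inter>{U. subspace_vec d U \<and>
       (\<forall>S. simple_sub d G \<rho> S \<and> S \<subseteq> W \<longrightarrow> S \<subseteq> U)}"

definition module_iso :: "nat set \<Rightarrow> (nat \<Rightarrow> 'k::field mat) \<Rightarrow> 'k vec set \<Rightarrow>
     (nat \<Rightarrow> 'k mat) \<Rightarrow> 'k vec set \<Rightarrow> bool" where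
  "module_iso G \<rho>1 W1 \<rho>2 W2 \<longleftrightarrow> (\<exists>f. bij_betw f W1 W2 \<and>
     (\<forall>u\<in>W1. \<forall>v\<in>W1. f (u + v) = f u + f v) \<and>
     (\<forall>c. \<forall>v\<in>W1. f (c \<cdot>\<^sub>v v) = c \<cdot>\<^sub>v f v) \<and>
     (\<forall>i\<in>G. \<forall>v\<in>W1. f (\<rho>1 i *\<^sub>v v) = \<rho>2 i *\<^sub>v f v))"

text \<open>H(D_m) is split over K: every simple H(D_m)-module is absolutely simple,
  i.e. its endomorphism ring is K.\<close>
definition HD_split :: "'k::field \<Rightarrow> nat \<Rightarrow> bool" where
  "HD_split q m \<longleftrightarrow> (\<forall>d \<rho>. HD_rep q m d \<rho> \<and> irreducible_rep d (Dgens m) \<rho> \<longrightarrow>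
     (\<forall>A\<in>carrier_mat d d. (\<forall>i\<in>Dgens m. A * \<rho> i = \<rho> i * A) \<longrightarrow>
        (\<exists>c. A = c \<cdot>\<^sub>m 1\<^sub>m d)))"

definition sigma_twist :: "(nat \<Rightarrow> 'k::field mat) \<Rightarrow> nat \<Rightarrow> 'k mat" where
  "sigma_twist \<rho> i = (if i = 0 then - \<rho> 0 else \<rho> i)"

end

theory Submission
  imports Defs
begin
locale hb =
  fixes q :: "'k::field" and n d :: nat and \<rho> :: "nat \<Rightarrow> 'k mat"
  assumes rep: "HB_rep q n d \<rho>" and qnz: "q \<noteq> 0"
begin

lemma car: "i < n \<Longrightarrow> \<rho> i \<in> carrier_mat d d"
  using rep unfolding HB_rep_def by blast

lemma cv: "i < n \<Longrightarrow> v \<in> carrier_vec d \<Longrightarrow> \<rho> i *\<^sub>v v \<in> carrier_vec d"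
  using car by (metis mult_mat_vec_carrier)

lemma t00: "0 < n \<Longrightarrow> v \<in> carrier_vec d \<Longrightarrow> \<rho> 0 *\<^sub>v (\<rho> 0 *\<^sub>v v) = v"
proof -
  assume "0 < n" "v \<in> carrier_vec d"
  moreover have "\<rho> 0 * \<rho> 0 = 1\<^sub>m d" using rep \<open>0<n\<close> unfolding HB_rep_def by blast
  ultimately show ?thesis using car[of 0] assoc_mult_mat_vec[of "\<rho> 0" d d "\<rho> 0" d v] by simp
qed

lemma quad: assumes "1 \<le> i" "i < n" "v \<in> carrier_vec d"
  shows "\<rho> i *\<^sub>v (\<rho> i *\<^sub>v v) = (q - 1) \<cdot>\<^sub>v (\<rho> i *\<^sub>v v) + q \<cdot>\<^sub>v v"
proof -
  have A: "\<rho> i \<in> carrier_mat d d" using car assms by auto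
  have "(\<rho> i + 1\<^sub>m d) * (\<rho> i - q \<cdot>\<^sub>m 1\<^sub>m d) = 0\<^sub>m d d" using rep assms unfolding HB_rep_def by blast
  hence "((\<rho> i + 1\<^sub>m d) * (\<rho> i - q \<cdot>\<^sub>m 1\<^sub>m d)) *\<^sub>v v = 0\<^sub>v d" using assms by auto
  hence "(\<rho> i + 1\<^sub>m d) *\<^sub>v ((\<rho> i - q \<cdot>\<^sub>m 1\<^sub>m d) *\<^sub>v v) = 0\<^sub>v d"
    using A assms by (subst (asm) assoc_mult_mat_vec[of _ d d _ d]) auto
  moreover have "(\<rho> i - q \<cdot>\<^sub>m 1\<^sub>m d) *\<^sub>v v = \<rho> i *\<^sub>v v - q \<cdot>\<^sub>v v"
    using A assms by (subst minus_mult_distrib_mat_vec[of _ d d]) auto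
  ultimately have "(\<rho> i + 1\<^sub>m d) *\<^sub>v (\<rho> i *\<^sub>v v - q \<cdot>\<^sub>v v) = 0\<^sub>v d" by simp
  hence "\<rho> i *\<^sub>v (\<rho> i *\<^sub>v v - q \<cdot>\<^sub>v v) + (\<rho> i *\<^sub>v v - q \<cdot>\<^sub>v v) = 0\<^sub>v d"
    using A assms by (simp add: add_mult_distrib_mat_vec[of _ d d])
  hence "\<rho> i *\<^sub>v (\<rho> i *\<^sub>v v) - q \<cdot>\<^sub>v (\<rho> i *\<^sub>v v) + (\<rho> i *\<^sub>v v - q \<cdot>\<^sub>v v) = 0\<^sub>v d"
    using A assms by (simp add: mult_minus_distrib_mat_vec[of _ d d] mult_mat_vec[of _ d d])
  hence "\<forall>j<d. (\<rho> i *\<^sub>v (\<rho> i *\<^sub>v v)) $ j - q * (\<rho> i *\<^sub>v v) $ j + ((\<rho> i *\<^sub>v v) $ j - q * v $ j) = 0"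
    using A assms by (auto simp: vec_eq_iff)
  thus ?thesis using A assms
    by (intro eq_vecI) (auto simp: algebra_simps eq_neg_iff_add_eq_0 diff_eq_eq)
qed

lemma braidB: "2 \<le> n \<Longrightarrow> v \<in> carrier_vec d \<Longrightarrow>
   \<rho> 0 *\<^sub>v (\<rho> 1 *\<^sub>v (\<rho> 0 *\<^sub>v (\<rho> 1 *\<^sub>v v))) = \<rho> 1 *\<^sub>v (\<rho> 0 *\<^sub>v (\<rho> 1 *\<^sub>v (\<rho> 0 *\<^sub>v v)))"
proof -
  assume a: "2 \<le> n" "v \<in> carrier_vec d"
  hence "\<rho> 0 * \<rho> 1 * \<rho> 0 * \<rho> 1 = \<rho> 1 * \<rho> 0 * \<rho> 1 * \<rho> 0" using rep unfolding HB_rep_def by blast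
  hence "(\<rho> 0 * \<rho> 1 * \<rho> 0 * \<rho> 1) *\<^sub>v v = (\<rho> 1 * \<rho> 0 * \<rho> 1 * \<rho> 0) *\<^sub>v v" by simp
  thus ?thesis using car[of 0] car[of 1] a by (simp add: assoc_mult_mat_vec[of _ d d _ d])
qed

lemma braidA: "1 \<le> i \<Longrightarrow> i + 1 < n \<Longrightarrow> v \<in> carrier_vec d \<Longrightarrow>
   \<rho> i *\<^sub>v (\<rho> (i+1) *\<^sub>v (\<rho> i *\<^sub>v v)) = \<rho> (i+1) *\<^sub>v (\<rho> i *\<^sub>v (\<rho> (i+1) *\<^sub>v v))"
proof -
  assume a: "1 \<le> i" "i + 1 < n" "v \<in> carrier_vec d"
  hence "\<rho> i * \<rho> (i+1) * \<rho> i = \<rho> (i+1) * \<rho> i * \<rho> (i+1)" using rep unfolding HB_rep_def by blast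
  hence "(\<rho> i * \<rho> (i+1) * \<rho> i) *\<^sub>v v = (\<rho> (i+1) * \<rho> i * \<rho> (i+1)) *\<^sub>v v" by simp
  thus ?thesis using car[of i] car[of "i+1"] a by (simp add: assoc_mult_mat_vec[of _ d d _ d])
qed

lemma commt: "i < n \<Longrightarrow> j < n \<Longrightarrow> i + 1 < j \<Longrightarrow> v \<in> carrier_vec d \<Longrightarrow>
   \<rho> i *\<^sub>v (\<rho> j *\<^sub>v v) = \<rho> j *\<^sub>v (\<rho> i *\<^sub>v v)"
proof -
  assume a: "i < n" "j < n" "i + 1 < j" "v \<in> carrier_vec d"
  hence "\<rho> i * \<rho> j = \<rho> j * \<rho> i" using rep unfolding HB_rep_def by blast
  hence "(\<rho> i * \<rho> j) *\<^sub>v v = (\<rho> j * \<rho> i) *\<^sub>v v" by simp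
  thus ?thesis using car[of i] car[of j] a by (simp add: assoc_mult_mat_vec[of _ d d _ d])
qed

definition tinv :: "nat \<Rightarrow> 'k vec \<Rightarrow> 'k vec" where
  "tinv i v = (if i = 0 then \<rho> 0 *\<^sub>v v else (1/q) \<cdot>\<^sub>v (\<rho> i *\<^sub>v v - (q - 1) \<cdot>\<^sub>v v))"

lemma tinv_car: "i < n \<Longrightarrow> v \<in> carrier_vec d \<Longrightarrow> tinv i v \<in> carrier_vec d"
  unfolding tinv_def using cv by auto

lemma t_tinv: assumes "i < n" "v \<in> carrier_vec d"
  shows "\<rho> i *\<^sub>v tinv i v = v \<and> tinv i (\<rho> i *\<^sub>v v) = v"
proof (cases "i = 0")
  case True thus ?thesis using t00 assms unfolding tinv_def by auto
next
  case False
  have A: "\<rho> i \<in> carrier_mat d d" using car assms by auto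
  have Q: "\<rho> i *\<^sub>v (\<rho> i *\<^sub>v v) = (q - 1) \<cdot>\<^sub>v (\<rho> i *\<^sub>v v) + q \<cdot>\<^sub>v v"
    using quad[of i v] False assms by auto
  have e1: "\<rho> i *\<^sub>v tinv i v = (1/q) \<cdot>\<^sub>v (\<rho> i *\<^sub>v (\<rho> i *\<^sub>v v) - (q - 1) \<cdot>\<^sub>v (\<rho> i *\<^sub>v v))"
    unfolding tinv_def using False A assms
    by (simp add: mult_mat_vec[of _ d d] mult_minus_distrib_mat_vec[of _ d d])
  have e2: "tinv i (\<rho> i *\<^sub>v v) = (1/q) \<cdot>\<^sub>v (\<rho> i *\<^sub>v (\<rho> i *\<^sub>v v) - (q - 1) \<cdot>\<^sub>v (\<rho> i *\<^sub>v v))"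
    unfolding tinv_def using False by simp
  have e3: "(1/q) \<cdot>\<^sub>v (\<rho> i *\<^sub>v (\<rho> i *\<^sub>v v) - (q - 1) \<cdot>\<^sub>v (\<rho> i *\<^sub>v v)) = v"
    unfolding Q using A assms qnz by (intro eq_vecI) (auto simp: field_simps)
  show ?thesis using e1 e2 e3 by simp
qed

end

context hb begin

primrec Lf :: "nat \<Rightarrow> 'k vec \<Rightarrow> 'k vec" where
  "Lf 0 v = \<rho> 0 *\<^sub>v v"
| "Lf (Suc k) v = \<rho> (Suc k) *\<^sub>v Lf k (\<rho> (Suc k) *\<^sub>v v)"

primrec Li :: "nat \<Rightarrow> 'k vec \<Rightarrow> 'k vec" where
  "Li 0 v = \<rho> 0 *\<^sub>v v"
| "Li (Suc k) v = tinv (Suc k) (Li k (tinv (Suc k) v))"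

lemma Lf_car: "k < n \<Longrightarrow> v \<in> carrier_vec d \<Longrightarrow> Lf k v \<in> carrier_vec d"
  by (induction k arbitrary: v) (auto simp: cv)

lemma Li_car: "k < n \<Longrightarrow> v \<in> carrier_vec d \<Longrightarrow> Li k v \<in> carrier_vec d"
  by (induction k arbitrary: v) (auto simp: cv tinv_car)

lemma Lf_Li: "k < n \<Longrightarrow> v \<in> carrier_vec d \<Longrightarrow> Lf k (Li k v) = v \<and> Li k (Lf k v) = v"
proof (induction k arbitrary: v)
  case 0 thus ?case by (simp add: t00)
next
  case (Suc k)
  have "Lf (Suc k) (Li (Suc k) v) = v"
    using Suc by (simp add: t_tinv tinv_car Li_car)
  moreover have "Li (Suc k) (Lf (Suc k) v) = v"
    using Suc by (simp add: t_tinv cv Lf_car)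
  ultimately show ?case by blast
qed

lemma Lf_add: "k < n \<Longrightarrow> u \<in> carrier_vec d \<Longrightarrow> v \<in> carrier_vec d \<Longrightarrow> Lf k (u + v) = Lf k u + Lf k v"
proof (induction k arbitrary: u v)
  case 0 thus ?case using car[of 0] by (simp add: mult_add_distrib_mat_vec[of _ d d])
next
  case (Suc k)
  have A: "\<rho> (Suc k) \<in> carrier_mat d d" using car Suc by auto
  show ?case using Suc A
    by (simp add: mult_add_distrib_mat_vec[of _ d d] cv Lf_car)
qed

lemma Lf_smult: "k < n \<Longrightarrow> v \<in> carrier_vec d \<Longrightarrow> Lf k (c \<cdot>\<^sub>v v) = c \<cdot>\<^sub>v Lf k v"
proof (induction k arbitrary: v)
  case 0 thus ?case using car[of 0] by (simp add: mult_mat_vec[of _ d d])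
next
  case (Suc k)
  have A: "\<rho> (Suc k) \<in> carrier_mat d d" using car Suc by auto
  show ?case using Suc A
    by (simp add: mult_mat_vec[of _ d d] cv Lf_car)
qed

lemma C2: "k + 1 < j \<Longrightarrow> j < n \<Longrightarrow> v \<in> carrier_vec d \<Longrightarrow> \<rho> j *\<^sub>v Lf k v = Lf k (\<rho> j *\<^sub>v v)"
proof (induction k arbitrary: v)
  case 0 thus ?case using commt[of 0 j v] by simp
next
  case (Suc k)
  have "\<rho> j *\<^sub>v Lf (Suc k) v = \<rho> (Suc k) *\<^sub>v (\<rho> j *\<^sub>v Lf k (\<rho> (Suc k) *\<^sub>v v))"
    using Suc by (simp add: cv Lf_car commt[of "Suc k" j, symmetric])
  also have "\<dots> = \<rho> (Suc k) *\<^sub>v Lf k (\<rho> j *\<^sub>v (\<rho> (Suc k) *\<^sub>v v))"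
    using Suc by (simp add: cv)
  also have "\<dots> = Lf (Suc k) (\<rho> j *\<^sub>v v)"
    using Suc commt[of "Suc k" j] by (simp add: cv)
  finally show ?case .
qed

lemma C3: "1 \<le> k \<Longrightarrow> k < n \<Longrightarrow> v \<in> carrier_vec d \<Longrightarrow> \<rho> 0 *\<^sub>v Lf k v = Lf k (\<rho> 0 *\<^sub>v v)"
proof (induction k arbitrary: v)
  case 0 thus ?case by simp
next
  case (Suc k)
  show ?case
  proof (cases "k = 0")
    case True thus ?thesis using Suc braidB[of v] by simp
  next
    case False
    have "\<rho> 0 *\<^sub>v Lf (Suc k) v = \<rho> (Suc k) *\<^sub>v (\<rho> 0 *\<^sub>v Lf k (\<rho> (Suc k) *\<^sub>v v))"
      using Suc False by (simp add: cv Lf_car commt[of 0 "Suc k"])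
    also have "\<dots> = \<rho> (Suc k) *\<^sub>v Lf k (\<rho> 0 *\<^sub>v (\<rho> (Suc k) *\<^sub>v v))"
      using Suc False by (simp add: cv)
    also have "\<dots> = Lf (Suc k) (\<rho> 0 *\<^sub>v v)"
      using Suc False commt[of 0 "Suc k"] by (simp add: cv)
    finally show ?thesis .
  qed
qed

lemma C4: "1 \<le> j \<Longrightarrow> j < k \<Longrightarrow> k < n \<Longrightarrow> v \<in> carrier_vec d \<Longrightarrow> \<rho> j *\<^sub>v Lf k v = Lf k (\<rho> j *\<^sub>v v)"
proof (induction k arbitrary: v)
  case 0 thus ?case by simp
next
  case (Suc k)
  show ?case
  proof (cases "j < k")
    case True
    have "\<rho> j *\<^sub>v Lf (Suc k) v = \<rho> (Suc k) *\<^sub>v (\<rho> j *\<^sub>v Lf k (\<rho> (Suc k) *\<^sub>v v))"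
      using Suc True by (simp add: cv Lf_car commt[of j "Suc k"])
    also have "\<dots> = \<rho> (Suc k) *\<^sub>v Lf k (\<rho> j *\<^sub>v (\<rho> (Suc k) *\<^sub>v v))"
      using Suc True by (simp add: cv)
    also have "\<dots> = Lf (Suc k) (\<rho> j *\<^sub>v v)"
      using Suc True commt[of j "Suc k"] by (simp add: cv)
    finally show ?thesis .
  next
    case False
    hence jk: "j = k" using Suc by simp
    then obtain m where km: "k = Suc m" using Suc by (cases k) auto
    let ?a = "\<rho> k" and ?b = "\<rho> (Suc k)"
    have X: "\<And>w. w \<in> carrier_vec d \<Longrightarrow> ?b *\<^sub>v Lf m w = Lf m (?b *\<^sub>v w)"
      using C2[of m "Suc k"] Suc km by simp
    have br: "\<And>w. w \<in> carrier_vec d \<Longrightarrow> ?a *\<^sub>v (?b *\<^sub>v (?a *\<^sub>v w)) = ?b *\<^sub>v (?a *\<^sub>v (?b *\<^sub>v w))"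
      using braidA[of k] Suc jk by simp
    have kn: "k < n" "Suc k < n" "m < n" using Suc km by auto
    note cc = cv[OF kn(1)] cv[OF kn(2)] Lf_car[OF kn(3)]
    have "Lf (Suc k) (?a *\<^sub>v v) = ?b *\<^sub>v (?a *\<^sub>v Lf m (?a *\<^sub>v (?b *\<^sub>v (?a *\<^sub>v v))))"
      using km by simp
    also have "\<dots> = ?b *\<^sub>v (?a *\<^sub>v Lf m (?b *\<^sub>v (?a *\<^sub>v (?b *\<^sub>v v))))"
      using br Suc by simp
    also have "\<dots> = ?b *\<^sub>v (?a *\<^sub>v (?b *\<^sub>v Lf m (?a *\<^sub>v (?b *\<^sub>v v))))"
      using X Suc cc by simp
    also have "\<dots> = ?a *\<^sub>v (?b *\<^sub>v (?a *\<^sub>v Lf m (?a *\<^sub>v (?b *\<^sub>v v))))"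
      using br Suc cc by simp
    also have "\<dots> = ?a *\<^sub>v Lf (Suc k) v"
      using km by simp
    finally show ?thesis using jk by simp
  qed
qed

end

locale lp0 =
  fixes d :: nat and G :: "nat set" and \<rho> :: "nat \<Rightarrow> 'k::field mat" and f :: "'k vec \<Rightarrow> 'k vec"
  assumes fc: "\<And>v. v \<in> carrier_vec d \<Longrightarrow> f v \<in> carrier_vec d"
    and fadd: "\<And>u v. u \<in> carrier_vec d \<Longrightarrow> v \<in> carrier_vec d \<Longrightarrow> f (u + v) = f u + f v"
    and fsm: "\<And>c v. v \<in> carrier_vec d \<Longrightarrow> f (c \<cdot>\<^sub>v v) = c \<cdot>\<^sub>v f v"
    and fcomm: "\<And>i v. i \<in> G \<Longrightarrow> v \<in> carrier_vec d \<Longrightarrow> f (\<rho> i *\<^sub>v v) = \<rho> i *\<^sub>v f v"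
    and rc: "\<And>i. i \<in> G \<Longrightarrow> \<rho> i \<in> carrier_mat d d"
begin

lemma f0: "f (0\<^sub>v d) = 0\<^sub>v d"
proof -
  have "f (0\<^sub>v d) = f (0 \<cdot>\<^sub>v 0\<^sub>v d)" by (rule arg_cong[of _ _ f], rule eq_vecI) auto
  also have "\<dots> = 0 \<cdot>\<^sub>v f (0\<^sub>v d)" by (rule fsm) simp
  also have "\<dots> = 0\<^sub>v d" using fc[of "0\<^sub>v d"] by auto
  finally show ?thesis .
qed

lemma subspace_img: "subspace_vec d U \<Longrightarrow> subspace_vec d (f ` U)"
  unfolding subspace_vec_def
proof (intro conjI ballI allI)
  assume U: "U \<subseteq> carrier_vec d \<and> 0\<^sub>v d \<in> U \<and> (\<forall>u\<in>U. \<forall>v\<in>U. u + v \<in> U) \<and> (\<forall>c. \<forall>v\<in>U. c \<cdot>\<^sub>v v \<in> U)"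
  show "f ` U \<subseteq> carrier_vec d" using U fc by auto
  show "0\<^sub>v d \<in> f ` U" using U f0 by (metis image_eqI)
  fix u v assume "u \<in> f ` U" "v \<in> f ` U"
  then obtain a b where "a \<in> U" "b \<in> U" "u = f a" "v = f b" by auto
  thus "u + v \<in> f ` U" using U fadd[of a b] by (metis image_eqI subsetD)
next
  fix c v
  assume U: "U \<subseteq> carrier_vec d \<and> 0\<^sub>v d \<in> U \<and> (\<forall>u\<in>U. \<forall>v\<in>U. u + v \<in> U) \<and> (\<forall>c. \<forall>v\<in>U. c \<cdot>\<^sub>v v \<in> U)"
    and "v \<in> f ` U"
  then obtain a where "a \<in> U" "v = f a" by auto
  thus "c \<cdot>\<^sub>v v \<in> f ` U" using U fsm[of a c] by (metis image_eqI subsetD)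
qed

lemma inv_img: "invariant d G \<rho> U \<Longrightarrow> invariant d G \<rho> (f ` U)"
  unfolding invariant_def
proof (intro conjI ballI)
  assume U: "subspace_vec d U \<and> (\<forall>i\<in>G. \<forall>v\<in>U. \<rho> i *\<^sub>v v \<in> U)"
  thus "subspace_vec d (f ` U)" using subspace_img by blast
  fix i v assume "i \<in> G" "v \<in> f ` U"
  then obtain a where "a \<in> U" "v = f a" by auto
  moreover have "a \<in> carrier_vec d" using U \<open>a \<in> U\<close> unfolding subspace_vec_def by blast
  ultimately show "\<rho> i *\<^sub>v v \<in> f ` U" using U fcomm[of i a] \<open>i \<in> G\<close> by (metis image_eqI)
qed

end

locale lp = lp0 +
  fixes g :: "'k::field vec \<Rightarrow> 'k vec"
  assumes gc: "\<And>v. v \<in> carrier_vec d \<Longrightarrow> g v \<in> carrier_vec d"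
    and fg: "\<And>v. v \<in> carrier_vec d \<Longrightarrow> f (g v) = v"
    and gf: "\<And>v. v \<in> carrier_vec d \<Longrightarrow> g (f v) = v"
begin

lemma g_lp0: "lp0 d G \<rho> g"
proof
  fix v :: "'k vec" assume "v \<in> carrier_vec d" thus "g v \<in> carrier_vec d" by (rule gc)
next
  fix u v :: "'k vec" assume uv: "u \<in> carrier_vec d" "v \<in> carrier_vec d"
  have "g (u + v) = g (f (g u) + f (g v))" using uv fg by simp
  also have "\<dots> = g (f (g u + g v))" using uv gc fadd by simp
  also have "\<dots> = g u + g v" using uv gc gf by simp
  finally show "g (u + v) = g u + g v" .
next
  fix c and v :: "'k vec" assume v: "v \<in> carrier_vec d"
  have "g (c \<cdot>\<^sub>v v) = g (c \<cdot>\<^sub>v f (g v))" using v fg by simp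
  also have "\<dots> = g (f (c \<cdot>\<^sub>v g v))" using v gc fsm by simp
  also have "\<dots> = c \<cdot>\<^sub>v g v" using v gc gf by simp
  finally show "g (c \<cdot>\<^sub>v v) = c \<cdot>\<^sub>v g v" .
next
  fix i and v :: "'k vec" assume iv: "i \<in> G" "v \<in> carrier_vec d"
  have c1: "\<rho> i *\<^sub>v g v \<in> carrier_vec d" using rc[OF iv(1)] gc[OF iv(2)] by (metis mult_mat_vec_carrier)
  have "g (\<rho> i *\<^sub>v v) = g (\<rho> i *\<^sub>v f (g v))" using iv fg by simp
  also have "\<dots> = g (f (\<rho> i *\<^sub>v g v))" using iv gc fcomm by simp
  also have "\<dots> = \<rho> i *\<^sub>v g v" using c1 gf by simp
  finally show "g (\<rho> i *\<^sub>v v) = \<rho> i *\<^sub>v g v" .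
next
  fix i assume "i \<in> G" thus "\<rho> i \<in> carrier_mat d d" by (rule rc)
qed

lemma gfS: "S \<subseteq> carrier_vec d \<Longrightarrow> g ` f ` S = S"
  using gf by (force simp: image_image)
lemma fgS: "S \<subseteq> carrier_vec d \<Longrightarrow> f ` g ` S = S"
  using fg by (force simp: image_image)

lemma simple_img: assumes S: "simple_sub d G \<rho> S" shows "simple_sub d G \<rho> (f ` S)"
proof -
  have invS: "invariant d G \<rho> S" and Sne: "S \<noteq> {0\<^sub>v d}"
    and Smin: "\<forall>U. invariant d G \<rho> U \<and> U \<subseteq> S \<longrightarrow> U = {0\<^sub>v d} \<or> U = S"
    using S unfolding simple_sub_def by auto
  have Sc: "S \<subseteq> carrier_vec d" "0\<^sub>v d \<in> S" using invS unfolding invariant_def subspace_vec_def by auto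
  have "f ` S \<noteq> {0\<^sub>v d}"
  proof
    assume h: "f ` S = {0\<^sub>v d}"
    obtain x where x: "x \<in> S" "x \<noteq> 0\<^sub>v d" using Sne Sc by blast
    have "f x = f (0\<^sub>v d)" using h x f0 by auto
    hence "g (f x) = g (f (0\<^sub>v d))" by simp
    thus False using x Sc gf by auto
  qed
  moreover have "\<forall>U. invariant d G \<rho> U \<and> U \<subseteq> f ` S \<longrightarrow> U = {0\<^sub>v d} \<or> U = f ` S"
  proof (intro allI impI)
    fix U assume U: "invariant d G \<rho> U \<and> U \<subseteq> f ` S"
    have Uc: "U \<subseteq> carrier_vec d" using U unfolding invariant_def subspace_vec_def by auto
    have "invariant d G \<rho> (g ` U)" using lp0.inv_img[OF g_lp0] U by blast
    moreover have "g ` U \<subseteq> S" using U gfS[OF Sc(1)] by blast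
    ultimately have "g ` U = {0\<^sub>v d} \<or> g ` U = S" using Smin by blast
    moreover have "f ` {0\<^sub>v d} = {0\<^sub>v d}" using f0 by simp
    ultimately show "U = {0\<^sub>v d} \<or> U = f ` S" using fgS[OF Uc] by metis
  qed
  ultimately show ?thesis using inv_img[OF invS] unfolding simple_sub_def by blast
qed

lemma socle_sub: assumes W: "W \<subseteq> carrier_vec d"
  shows "f ` socle d G \<rho> W \<subseteq> socle d G \<rho> (f ` W)"
proof
  fix y assume "y \<in> f ` socle d G \<rho> W"
  then obtain x where x: "x \<in> socle d G \<rho> W" "y = f x" by auto
  show "y \<in> socle d G \<rho> (f ` W)"
    unfolding socle_def
  proof (rule InterI, clarify)
    fix U assume U: "subspace_vec d U" "\<forall>S. simple_sub d G \<rho> S \<and> S \<subseteq> f ` W \<longrightarrow> S \<subseteq> U"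
    have Uc: "U \<subseteq> carrier_vec d" using U unfolding subspace_vec_def by auto
    have "subspace_vec d (g ` U)" using lp0.subspace_img[OF g_lp0] U by blast
    moreover have "\<forall>S. simple_sub d G \<rho> S \<and> S \<subseteq> W \<longrightarrow> S \<subseteq> g ` U"
    proof (intro allI impI)
      fix S assume S: "simple_sub d G \<rho> S \<and> S \<subseteq> W"
      hence "f ` S \<subseteq> U" using U simple_img by blast
      hence "g ` f ` S \<subseteq> g ` U" by blast
      thus "S \<subseteq> g ` U" using gfS[of S] S W by auto
    qed
    ultimately have "x \<in> g ` U" using x unfolding socle_def by blast
    hence "f x \<in> f ` g ` U" by blast
    thus "y \<in> U" using x fgS[OF Uc] by simp
  qed
qed

lemma socle_c: "socle d G \<rho> W \<subseteq> carrier_vec d"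
proof -
  have a: "subspace_vec d (carrier_vec d)" unfolding subspace_vec_def by auto
  have b: "\<forall>S. simple_sub d G \<rho> S \<and> S \<subseteq> W \<longrightarrow> S \<subseteq> carrier_vec d"
    unfolding simple_sub_def invariant_def subspace_vec_def by simp
  have "carrier_vec d \<in> {U. subspace_vec d U \<and> (\<forall>S. simple_sub d G \<rho> S \<and> S \<subseteq> W \<longrightarrow> S \<subseteq> U)}"
    using a b by simp
  thus ?thesis unfolding socle_def by (rule Inter_lower)
qed

end

lemma lp_swap: assumes "lp d G \<rho> f g" shows "lp d G \<rho> g f"
proof -
  interpret lp d G \<rho> f g by fact
  show ?thesis by (intro lp.intro g_lp0 lp_axioms.intro) (auto simp: fc fg gf)
qed

context lp begin

lemma socle_img: assumes W: "W \<subseteq> carrier_vec d"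
  shows "f ` socle d G \<rho> W = socle d G \<rho> (f ` W)"
proof
  show "f ` socle d G \<rho> W \<subseteq> socle d G \<rho> (f ` W)" by (rule socle_sub[OF W])
next
  have L: "lp d G \<rho> g f" using lp_swap lp_axioms by blast
  have fW: "f ` W \<subseteq> carrier_vec d" using W fc by auto
  have "g ` socle d G \<rho> (f ` W) \<subseteq> socle d G \<rho> (g ` f ` W)"
    by (rule lp.socle_sub[OF L fW])
  hence "f ` g ` socle d G \<rho> (f ` W) \<subseteq> f ` socle d G \<rho> W" using gfS[OF W] by auto
  thus "socle d G \<rho> (f ` W) \<subseteq> f ` socle d G \<rho> W" using fgS[OF socle_c] by simp
qed

lemma iso_socle: assumes W: "W \<subseteq> carrier_vec d"
  shows "module_iso G \<rho> (socle d G \<rho> W) \<rho> (socle d G \<rho> (f ` W))"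
  unfolding module_iso_def
proof (intro exI[of _ f] conjI ballI allI)
  have "inj_on f (socle d G \<rho> W)"
  proof (rule inj_onI)
    fix x y assume "x \<in> socle d G \<rho> W" "y \<in> socle d G \<rho> W" "f x = f y"
    moreover hence "x \<in> carrier_vec d" "y \<in> carrier_vec d" using socle_c by auto
    ultimately show "x = y" using gf by metis
  qed
  thus "bij_betw f (socle d G \<rho> W) (socle d G \<rho> (f ` W))"
    using socle_img[OF W] by (simp add: bij_betw_def)
  fix u v assume "u \<in> socle d G \<rho> W" "v \<in> socle d G \<rho> W"
  thus "f (u + v) = f u + f v" using socle_c fadd by blast
next
  fix c v assume "v \<in> socle d G \<rho> W"
  thus "f (c \<cdot>\<^sub>v v) = c \<cdot>\<^sub>v f v" using socle_c fsm by blast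
next
  fix i v assume "i \<in> G" "v \<in> socle d G \<rho> W"
  thus "f (\<rho> i *\<^sub>v v) = \<rho> i *\<^sub>v f v" using socle_c fcomm by blast
qed

end

lemma sub_c: "subspace_vec d W \<Longrightarrow> v \<in> W \<Longrightarrow> v \<in> carrier_vec d"
  unfolding subspace_vec_def by blast

lemma sub_add: "subspace_vec d W \<Longrightarrow> u \<in> W \<Longrightarrow> v \<in> W \<Longrightarrow> u + v \<in> W"
  unfolding subspace_vec_def by blast

lemma sub_smult: "subspace_vec d W \<Longrightarrow> v \<in> W \<Longrightarrow> c \<cdot>\<^sub>v v \<in> W"
  unfolding subspace_vec_def by blast

lemma sub_zero: "subspace_vec d W \<Longrightarrow> 0\<^sub>v d \<in> W"
  unfolding subspace_vec_def by blast

lemma sub_minus: assumes W: "subspace_vec d W" and u: "u \<in> W" and v: "v \<in> W"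
  shows "u - v \<in> (W :: 'k::field vec set)"
proof -
  have "u - v = u + (-1) \<cdot>\<^sub>v v" using sub_c[OF W u] sub_c[OF W v] by (intro eq_vecI) auto
  moreover have "u + (-1) \<cdot>\<^sub>v v \<in> W" by (intro sub_add[OF W u] sub_smult[OF W v])
  ultimately show ?thesis by simp
qed

lemma vec_sub0: assumes "u \<in> carrier_vec d" "v \<in> carrier_vec d" "u - v = 0\<^sub>v d"
  shows "u = (v :: 'k::field vec)"
proof (rule eq_vecI)
  fix i assume i: "i < dim_vec v"
  have "(u - v) $ i = 0" using assms(3) i assms(2) by simp
  moreover have "(u - v) $ i = u $ i - v $ i" using i by (rule index_minus_vec(1))
  ultimately show "u $ i = v $ i" by simp
next
  show "dim_vec u = dim_vec v" using assms by simp
qed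

lemma inv_sub: "invariant d G \<sigma> W \<Longrightarrow> subspace_vec d W"
  unfolding invariant_def by blast

lemma inv_act: "invariant d G \<sigma> W \<Longrightarrow> i \<in> G \<Longrightarrow> v \<in> W \<Longrightarrow> \<sigma> i *\<^sub>v v \<in> W"
  unfolding invariant_def by blast

lemma inv_Int: "invariant d G \<sigma> U \<Longrightarrow> invariant d G \<sigma> W \<Longrightarrow> invariant d G \<sigma> (U \<inter> W)"
  unfolding invariant_def subspace_vec_def by auto

lemma simple_minimal: "simple_sub d G \<sigma> W \<Longrightarrow> invariant d G \<sigma> U \<Longrightarrow> U \<subseteq> W \<Longrightarrow> U = {0\<^sub>v d} \<or> U = W"
  unfolding simple_sub_def by blast

lemma simple_inv: "simple_sub d G \<sigma> W \<Longrightarrow> invariant d G \<sigma> W"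
  unfolding simple_sub_def by blast

lemma simple_ne: assumes "simple_sub d G \<sigma> W" shows "\<exists>x\<in>W. x \<noteq> 0\<^sub>v d"
proof -
  have "W \<noteq> {0\<^sub>v d}" using assms unfolding simple_sub_def by blast
  moreover have "0\<^sub>v d \<in> W" using sub_zero[OF inv_sub[OF simple_inv[OF assms]]] .
  ultimately show ?thesis by blast
qed

lemma imfull:
  fixes A B X :: "'k::field vec set"
  assumes A: "simple_sub d G \<sigma> A" and B: "invariant d G \<sigma> B" and X: "invariant d G \<sigma> X"
    and rc: "\<And>i. i \<in> G \<Longrightarrow> \<sigma> i \<in> carrier_mat d d"
    and XB: "X \<inter> B = {0\<^sub>v d}" and Xne: "\<exists>x\<in>X. x \<noteq> 0\<^sub>v d"
    and dec: "\<forall>x\<in>X. \<exists>a\<in>A. \<exists>b\<in>B. x = a + b"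
  shows "\<forall>a\<in>A. \<exists>b\<in>B. a + b \<in> X"
proof -
  let ?I = "{a \<in> A. \<exists>b\<in>B. a + b \<in> X}"
  have sA: "subspace_vec d A" using inv_sub[OF simple_inv[OF A]] .
  have sB: "subspace_vec d B" using inv_sub[OF B] .
  have sX: "subspace_vec d X" using inv_sub[OF X] .
  have "invariant d G \<sigma> ?I"
    unfolding invariant_def subspace_vec_def
  proof (intro conjI ballI allI)
    show "?I \<subseteq> carrier_vec d" using sA sub_c by blast
    have "0\<^sub>v d + 0\<^sub>v d = (0\<^sub>v d :: 'k vec)" by simp
    thus "0\<^sub>v d \<in> ?I" using sub_zero[OF sA] sub_zero[OF sB] sub_zero[OF sX] by force
  next
    fix u v assume u: "u \<in> ?I" and v: "v \<in> ?I"
    then obtain b b' where b: "b \<in> B" "u + b \<in> X" and b': "b' \<in> B" "v + b' \<in> X" by auto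
    have uc: "u \<in> carrier_vec d" "v \<in> carrier_vec d" using u v sA sub_c by auto
    have bc: "b \<in> carrier_vec d" "b' \<in> carrier_vec d" using b b' sB sub_c by auto
    have "(u + v) + (b + b') = (u + b) + (v + b')" using uc bc by (intro eq_vecI) auto
    hence "(u + v) + (b + b') \<in> X" using sub_add[OF sX b(2) b'(2)] by simp
    moreover have "u + v \<in> A" "b + b' \<in> B" using u v b b' sA sB sub_add by auto
    ultimately show "u + v \<in> ?I" by blast
  next
    fix c v assume v: "v \<in> ?I"
    then obtain b where b: "b \<in> B" "v + b \<in> X" by auto
    have vc: "v \<in> carrier_vec d" "b \<in> carrier_vec d" using v b sA sB sub_c by auto
    have "c \<cdot>\<^sub>v (v + b) = c \<cdot>\<^sub>v v + c \<cdot>\<^sub>v b" using vc by (rule smult_add_distrib_vec)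
    hence "c \<cdot>\<^sub>v v + c \<cdot>\<^sub>v b \<in> X" using sub_smult[OF sX b(2), of c] by simp
    thus "c \<cdot>\<^sub>v v \<in> ?I" using v b sA sB sub_smult by blast
  next
    fix i v assume i: "i \<in> G" and v: "v \<in> ?I"
    then obtain b where b: "b \<in> B" "v + b \<in> X" by auto
    have vc: "v \<in> carrier_vec d" "b \<in> carrier_vec d" using v b sA sB sub_c by auto
    have "\<sigma> i *\<^sub>v (v + b) = \<sigma> i *\<^sub>v v + \<sigma> i *\<^sub>v b" using rc[OF i] vc by (rule mult_add_distrib_mat_vec)
    hence "\<sigma> i *\<^sub>v v + \<sigma> i *\<^sub>v b \<in> X" using inv_act[OF X i b(2)] by simp
    thus "\<sigma> i *\<^sub>v v \<in> ?I" using v b i inv_act[OF simple_inv[OF A]] inv_act[OF B] by blast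
  qed
  moreover have "?I \<noteq> {0\<^sub>v d}"
  proof
    assume h: "?I = {0\<^sub>v d}"
    obtain x where x: "x \<in> X" "x \<noteq> 0\<^sub>v d" using Xne by blast
    then obtain a b where ab: "a \<in> A" "b \<in> B" "x = a + b" using dec by blast
    hence "a \<in> ?I" using x by blast
    hence "a = 0\<^sub>v d" using h by blast
    have "b \<in> carrier_vec d" using ab sB sub_c by blast
    hence "x = b" using ab \<open>a = 0\<^sub>v d\<close> by simp
    thus False using x XB ab by blast
  qed
  ultimately have "?I = A" using simple_minimal[OF A] by blast
  thus ?thesis by blast
qed

lemma graph_iso:
  fixes A B X :: "'k::field vec set"
  assumes A: "simple_sub d G \<sigma> A" and B: "simple_sub d G \<sigma> B" and X: "invariant d G \<sigma> X"
    and rc: "\<And>i. i \<in> G \<Longrightarrow> \<sigma> i \<in> carrier_mat d d"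
    and XA: "X \<inter> A = {0\<^sub>v d}" and XB: "X \<inter> B = {0\<^sub>v d}" and Xne: "\<exists>x\<in>X. x \<noteq> 0\<^sub>v d"
    and dec: "\<forall>x\<in>X. \<exists>a\<in>A. \<exists>b\<in>B. x = a + b"
  shows "module_iso G \<sigma> A \<sigma> B"
proof -
  have sA: "subspace_vec d A" using inv_sub[OF simple_inv[OF A]] .
  have sB: "subspace_vec d B" using inv_sub[OF simple_inv[OF B]] .
  have sX: "subspace_vec d X" using inv_sub[OF X] .
  have fullA: "\<forall>a\<in>A. \<exists>b\<in>B. a + b \<in> X"
    using imfull[OF A simple_inv[OF B] X rc XB Xne dec] by blast
  have dec': "\<forall>x\<in>X. \<exists>b\<in>B. \<exists>a\<in>A. x = b + a"
  proof
    fix x assume "x \<in> X"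
    then obtain a b where ab: "a \<in> A" "b \<in> B" "x = a + b" using dec by blast
    have "a + b = b + a" using ab sA sB sub_c comm_add_vec by blast
    thus "\<exists>b\<in>B. \<exists>a\<in>A. x = b + a" using ab by auto
  qed
  have fullB: "\<forall>b\<in>B. \<exists>a\<in>A. b + a \<in> X"
    using imfull[OF B simple_inv[OF A] X rc XA Xne dec'] by blast
  have uniq: "\<And>a b b'. a \<in> A \<Longrightarrow> b \<in> B \<Longrightarrow> b' \<in> B \<Longrightarrow> a + b \<in> X \<Longrightarrow> a + b' \<in> X \<Longrightarrow> b = b'"
  proof -
    fix a b b' assume h: "a \<in> A" "b \<in> B" "b' \<in> B" "a + b \<in> X" "a + b' \<in> X"
    have c: "a \<in> carrier_vec d" "b \<in> carrier_vec d" "b' \<in> carrier_vec d" using h sA sB sub_c by auto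
    have "(a + b) - (a + b') = b - b'" using c by (intro eq_vecI) auto
    hence "b - b' \<in> X" using sub_minus[OF sX h(4) h(5)] by simp
    moreover have "b - b' \<in> B" using sub_minus[OF sB h(2) h(3)] .
    ultimately have "b - b' = 0\<^sub>v d" using XB by blast
    thus "b = b'" using vec_sub0 c by blast
  qed
  define \<phi> where "\<phi> a = (SOME b. b \<in> B \<and> a + b \<in> X)" for a
  have phi: "\<phi> a \<in> B \<and> a + \<phi> a \<in> X" if a: "a \<in> A" for a
  proof -
    have "\<exists>b. b \<in> B \<and> a + b \<in> X" using fullA a by blast
    thus ?thesis unfolding \<phi>_def by (rule someI_ex)
  qed
  have phiu: "\<And>a b. a \<in> A \<Longrightarrow> b \<in> B \<Longrightarrow> a + b \<in> X \<Longrightarrow> \<phi> a = b"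
    using phi uniq by blast
  have cA: "\<And>a. a \<in> A \<Longrightarrow> a \<in> carrier_vec d" using sA sub_c by blast
  have cB: "\<And>a. a \<in> B \<Longrightarrow> a \<in> carrier_vec d" using sB sub_c by blast
  show ?thesis unfolding module_iso_def
  proof (intro exI[of _ \<phi>] conjI ballI allI)
    show "bij_betw \<phi> A B" unfolding bij_betw_def
    proof
      show "inj_on \<phi> A"
      proof (rule inj_onI)
        fix a a' assume h: "a \<in> A" "a' \<in> A" "\<phi> a = \<phi> a'"
        have c: "a \<in> carrier_vec d" "a' \<in> carrier_vec d" "\<phi> a \<in> carrier_vec d" using h cA cB phi by auto
        have "(a + \<phi> a) - (a' + \<phi> a') = a - a'" using c h(3) by (intro eq_vecI) auto
        moreover have "(a + \<phi> a) - (a' + \<phi> a') \<in> X" using sub_minus[OF sX] phi h by blast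
        ultimately have "a - a' \<in> X" by simp
        moreover have "a - a' \<in> A" using sub_minus[OF sA h(1) h(2)] .
        ultimately have "a - a' = 0\<^sub>v d" using XA by blast
        thus "a = a'" using vec_sub0 c by blast
      qed
      show "\<phi> ` A = B"
      proof
        show "\<phi> ` A \<subseteq> B" using phi by blast
        show "B \<subseteq> \<phi> ` A"
        proof
          fix b assume b: "b \<in> B"
          then obtain a where a: "a \<in> A" "b + a \<in> X" using fullB by blast
          moreover have "b + a = a + b" using cA cB b a comm_add_vec by blast
          ultimately have "a + b \<in> X" by simp
          hence "\<phi> a = b" using phiu a b by blast
          thus "b \<in> \<phi> ` A" using a by blast
        qed
      qed
    qed
  next
    fix u v assume u: "u \<in> A" and v: "v \<in> A"
    have c: "u \<in> carrier_vec d" "v \<in> carrier_vec d" "\<phi> u \<in> carrier_vec d" "\<phi> v \<in> carrier_vec d"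
      using u v phi cA cB by auto
    have "(u + v) + (\<phi> u + \<phi> v) = (u + \<phi> u) + (v + \<phi> v)" using c by (intro eq_vecI) auto
    moreover have "(u + \<phi> u) + (v + \<phi> v) \<in> X" using sub_add[OF sX] phi u v by blast
    ultimately have "(u + v) + (\<phi> u + \<phi> v) \<in> X" by simp
    moreover have "u + v \<in> A" "\<phi> u + \<phi> v \<in> B" using sub_add[OF sA u v] sub_add[OF sB] phi u v by auto
    ultimately show "\<phi> (u + v) = \<phi> u + \<phi> v" using phiu by blast
  next
    fix c v assume v: "v \<in> A"
    have cc: "v \<in> carrier_vec d" "\<phi> v \<in> carrier_vec d" using v phi cA cB by auto
    have "c \<cdot>\<^sub>v v + c \<cdot>\<^sub>v \<phi> v = c \<cdot>\<^sub>v (v + \<phi> v)" using cc by (simp add: smult_add_distrib_vec)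
    moreover have "c \<cdot>\<^sub>v (v + \<phi> v) \<in> X" using sub_smult[OF sX] phi v by blast
    ultimately have "c \<cdot>\<^sub>v v + c \<cdot>\<^sub>v \<phi> v \<in> X" by simp
    moreover have "c \<cdot>\<^sub>v v \<in> A" "c \<cdot>\<^sub>v \<phi> v \<in> B" using sub_smult[OF sA v] sub_smult[OF sB] phi v by auto
    ultimately show "\<phi> (c \<cdot>\<^sub>v v) = c \<cdot>\<^sub>v \<phi> v" using phiu by blast
  next
    fix i v assume i: "i \<in> G" and v: "v \<in> A"
    have cc: "v \<in> carrier_vec d" "\<phi> v \<in> carrier_vec d" using v phi cA cB by auto
    have "\<sigma> i *\<^sub>v v + \<sigma> i *\<^sub>v \<phi> v = \<sigma> i *\<^sub>v (v + \<phi> v)" using cc rc[OF i]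
      by (simp add: mult_add_distrib_mat_vec[of _ d d])
    moreover have "\<sigma> i *\<^sub>v (v + \<phi> v) \<in> X" using inv_act[OF X i] phi v by blast
    ultimately have "\<sigma> i *\<^sub>v v + \<sigma> i *\<^sub>v \<phi> v \<in> X" by simp
    moreover have "\<sigma> i *\<^sub>v v \<in> A" "\<sigma> i *\<^sub>v \<phi> v \<in> B"
      using inv_act[OF simple_inv[OF A] i v] inv_act[OF simple_inv[OF B] i] phi v by auto
    ultimately show "\<phi> (\<sigma> i *\<^sub>v v) = \<sigma> i *\<^sub>v \<phi> v" using phiu by blast
  qed
qed

context hb begin

lemma Dg_car: "2 \<le> n \<Longrightarrow> i < n \<Longrightarrow> Dgen \<rho> i \<in> carrier_mat d d"
  unfolding Dgen_def using car[of 0] car[of 1] car[of i] by auto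

lemma Dg0: assumes n2: "2 \<le> n" and v: "v \<in> carrier_vec d"
  shows "Dgen \<rho> 0 *\<^sub>v v = \<rho> 0 *\<^sub>v (\<rho> 1 *\<^sub>v (\<rho> 0 *\<^sub>v v))"
proof -
  have c0: "\<rho> 0 \<in> carrier_mat d d" and c1: "\<rho> 1 \<in> carrier_mat d d" using car[of 0] car[of 1] n2 by auto
  have "Dgen \<rho> 0 *\<^sub>v v = (\<rho> 0 * \<rho> 1) *\<^sub>v (\<rho> 0 *\<^sub>v v)"
  proof -
    have "Dgen \<rho> 0 = \<rho> 0 * \<rho> 1 * \<rho> 0" unfolding Dgen_def by simp
    thus ?thesis using c0 c1 v by (simp only:) (intro assoc_mult_mat_vec, auto)
  qed
  also have "\<dots> = \<rho> 0 *\<^sub>v (\<rho> 1 *\<^sub>v (\<rho> 0 *\<^sub>v v))"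
    using c0 c1 v by (intro assoc_mult_mat_vec) auto
  finally show ?thesis .
qed

lemma Dgi: "i \<noteq> 0 \<Longrightarrow> Dgen \<rho> i = \<rho> i"
  unfolding Dgen_def by simp

lemma Dgens_n: "2 \<le> n \<Longrightarrow> Dgens n = {..<n}"
  unfolding Dgens_def by simp

lemma t0_lp0: "0 < n \<Longrightarrow> lp0 d {} \<rho> (\<lambda>v. \<rho> 0 *\<^sub>v v)"
  by unfold_locales (auto simp: cv mult_add_distrib_mat_vec[OF car[of 0]] mult_mat_vec[OF car[of 0]])

lemma Y_in: assumes n2: "2 \<le> n" and W: "invariant d (Dgens n) (Dgen \<rho>) W"
  shows "1 \<le> k \<Longrightarrow> k < n \<Longrightarrow> v \<in> W \<Longrightarrow> \<rho> 0 *\<^sub>v Lf k v \<in> W"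
proof (induction k arbitrary: v)
  case 0 thus ?case by simp
next
  case (Suc k)
  have sW: "subspace_vec d W" using inv_sub[OF W] .
  have act: "\<And>i w. i < n \<Longrightarrow> w \<in> W \<Longrightarrow> Dgen \<rho> i *\<^sub>v w \<in> W"
    using inv_act[OF W] Dgens_n[OF n2] by blast
  have vc: "v \<in> carrier_vec d" using sub_c[OF sW Suc(4)] .
  show ?case
  proof (cases "k = 0")
    case True
    have "\<rho> 1 *\<^sub>v v \<in> W" using act[of 1 v] Suc Dgi[of 1] n2 by simp
    hence "Dgen \<rho> 0 *\<^sub>v (\<rho> 1 *\<^sub>v v) \<in> W" using act n2 by simp
    thus ?thesis using True Dg0[OF n2] vc n2 by (simp add: cv)
  next
    case False
    have "\<rho> (Suc k) *\<^sub>v v \<in> W" using act[of "Suc k" v] Suc Dgi[of "Suc k"] by simp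
    hence "\<rho> 0 *\<^sub>v Lf k (\<rho> (Suc k) *\<^sub>v v) \<in> W" using Suc False by simp
    hence "\<rho> (Suc k) *\<^sub>v (\<rho> 0 *\<^sub>v Lf k (\<rho> (Suc k) *\<^sub>v v)) \<in> W"
      using act[of "Suc k"] Suc Dgi[of "Suc k"] by simp
    thus ?thesis using Suc False vc by (simp add: cv Lf_car commt[of 0 "Suc k"])
  qed
qed

lemma twist: assumes n2: "2 \<le> n" and W: "invariant d (Dgens n) (Dgen \<rho>) W"
  shows "invariant d (Dgens n) (Dgen \<rho>) ((\<lambda>v. \<rho> 0 *\<^sub>v v) ` W)"
  unfolding invariant_def
proof (intro conjI ballI)
  have sW: "subspace_vec d W" using inv_sub[OF W] .
  show "subspace_vec d ((\<lambda>v. \<rho> 0 *\<^sub>v v) ` W)"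
    using lp0.subspace_img[OF t0_lp0 sW] n2 by simp
  have act: "\<And>i w. i < n \<Longrightarrow> w \<in> W \<Longrightarrow> Dgen \<rho> i *\<^sub>v w \<in> W"
    using inv_act[OF W] Dgens_n[OF n2] by blast
  fix i y assume i: "i \<in> Dgens n" and y: "y \<in> (\<lambda>v. \<rho> 0 *\<^sub>v v) ` W"
  then obtain v where v: "v \<in> W" "y = \<rho> 0 *\<^sub>v v" by auto
  have vc: "v \<in> carrier_vec d" using sub_c[OF sW v(1)] .
  have iN: "i < n" using i Dgens_n[OF n2] by simp
  consider "i = 0" | "i = 1" | "2 \<le> i" by linarith
  thus "Dgen \<rho> i *\<^sub>v y \<in> (\<lambda>v. \<rho> 0 *\<^sub>v v) ` W"
  proof cases
    case 1
    have "Dgen \<rho> i *\<^sub>v y = \<rho> 0 *\<^sub>v (\<rho> 1 *\<^sub>v v)" using 1 v vc n2 Dg0 by (simp add: cv t00)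
    moreover have "\<rho> 1 *\<^sub>v v \<in> W" using act[of 1 v] v n2 Dgi[of 1] by simp
    ultimately show ?thesis by blast
  next
    case 2
    have "Dgen \<rho> i *\<^sub>v y = \<rho> 0 *\<^sub>v (Dgen \<rho> 0 *\<^sub>v v)" using 2 v vc n2 Dg0 Dgi[of 1] by (simp add: cv t00)
    moreover have "Dgen \<rho> 0 *\<^sub>v v \<in> W" using act[of 0 v] v n2 by simp
    ultimately show ?thesis by blast
  next
    case 3
    have "Dgen \<rho> i *\<^sub>v y = \<rho> 0 *\<^sub>v (\<rho> i *\<^sub>v v)" using 3 v vc iN Dgi[of i] commt[of 0 i v] by simp
    moreover have "\<rho> i *\<^sub>v v \<in> W" using act[of i v] v iN 3 Dgi[of i] by simp
    ultimately show ?thesis by blast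
  qed
qed

lemma t0_nz: assumes n2: "2 \<le> n" and sW: "subspace_vec d W" and ne: "\<exists>x\<in>W. x \<noteq> 0\<^sub>v d"
  shows "\<exists>y\<in>(\<lambda>v. \<rho> 0 *\<^sub>v v) ` W. y \<noteq> 0\<^sub>v d"
proof -
  obtain x where x: "x \<in> W" "x \<noteq> 0\<^sub>v d" using ne by blast
  have xc: "x \<in> carrier_vec d" using sub_c[OF sW x(1)] .
  have "\<rho> 0 *\<^sub>v x \<noteq> 0\<^sub>v d"
  proof
    assume "\<rho> 0 *\<^sub>v x = 0\<^sub>v d"
    hence "\<rho> 0 *\<^sub>v (\<rho> 0 *\<^sub>v x) = \<rho> 0 *\<^sub>v 0\<^sub>v d" by simp
    also have "\<dots> = 0\<^sub>v d" using car[of 0] n2 by auto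
    finally show False using t00 xc x n2 by simp
  qed
  thus ?thesis using x by blast
qed

lemma tt: assumes "2 \<le> n" "W \<subseteq> carrier_vec d"
  shows "(\<lambda>v. \<rho> 0 *\<^sub>v v) ` (\<lambda>v. \<rho> 0 *\<^sub>v v) ` W = W"
proof -
  have "(\<lambda>x. \<rho> 0 *\<^sub>v (\<rho> 0 *\<^sub>v x)) ` W = (\<lambda>x. x) ` W"
    by (rule image_cong) (use assms t00 in auto)
  thus ?thesis by (simp add: image_image)
qed

end

theorem theorem3p10:
  fixes q :: "'k::field" and n d :: nat and \<rho> :: "nat \<Rightarrow> 'k mat"
    and Wp Wm :: "'k vec set"
  assumes char: "(2::'k) \<noteq> 0"
    and q_unit: "q \<noteq> 0"
    and prod0: "(\<Prod>i=1..n-1. 1 + q ^ i) = 0"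
    and splitn: "HD_split q n"
    and splitn1: "HD_split q (n - 1)"
    and rep: "HB_rep q n d \<rho>"
    and simple: "irreducible_rep d {..<n} \<rho>"
    and fixed: "module_iso {..<n} \<rho> (carrier_vec d) (sigma_twist \<rho>) (carrier_vec d)"
    and Wp: "simple_sub d (Dgens n) (Dgen \<rho>) Wp"
    and Wm: "simple_sub d (Dgens n) (Dgen \<rho>) Wm"
    and disj: "Wp \<inter> Wm = {0\<^sub>v d}"
    and span: "\<forall>v\<in>carrier_vec d. \<exists>u\<in>Wp. \<exists>w\<in>Wm. v = u + w"
    and noniso: "\<not> module_iso (Dgens n) (Dgen \<rho>) Wp (Dgen \<rho>) Wm"
  shows "module_iso (Dgens (n - 1)) (Dgen \<rho>)
           (socle d (Dgens (n - 1)) (Dgen \<rho>) Wp)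
           (Dgen \<rho>) (socle d (Dgens (n - 1)) (Dgen \<rho>) Wm)"
proof -
  have n2: "2 \<le> n"
  proof (rule ccontr)
    assume "\<not> 2 \<le> n"
    hence "{1..n-1} = {}" by auto
    thus False using prod0 by simp
  qed
  interpret hb q n d \<rho> using rep q_unit by unfold_locales
  let ?t = "\<lambda>v. \<rho> 0 *\<^sub>v v"
  let ?G = "Dgens n"
  let ?s = "Dgen \<rho>"
  have iWp: "invariant d ?G ?s Wp" and iWm: "invariant d ?G ?s Wm"
    using simple_inv[OF Wp] simple_inv[OF Wm] .
  have sWp: "subspace_vec d Wp" and sWm: "subspace_vec d Wm" using inv_sub iWp iWm by blast+
  have cWp: "Wp \<subseteq> carrier_vec d" and cWm: "Wm \<subseteq> carrier_vec d" using sub_c sWp sWm by blast+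
  have rcG: "\<And>i. i \<in> ?G \<Longrightarrow> ?s i \<in> carrier_mat d d" using Dg_car n2 Dgens_n by auto
  define X where "X = ?t ` Wp"
  have iX: "invariant d ?G ?s X" unfolding X_def by (rule twist[OF n2 iWp])
  have sX: "subspace_vec d X" using inv_sub[OF iX] .
  have cX: "X \<subseteq> carrier_vec d" using sub_c sX by blast
  have Xne: "\<exists>x\<in>X. x \<noteq> 0\<^sub>v d" unfolding X_def by (rule t0_nz[OF n2 sWp simple_ne[OF Wp]])
  have tX: "?t ` X = Wp" unfolding X_def using tt[OF n2 cWp] .
  have XWm: "X = Wm"
  proof -
    have "X \<inter> Wm = {0\<^sub>v d} \<or> X \<inter> Wm = Wm"
      using simple_minimal[OF Wm inv_Int[OF iX iWm]] by blast
    thus ?thesis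
    proof
      assume h: "X \<inter> Wm = Wm"
      hence "?t ` Wm \<subseteq> Wp" using tX by blast
      moreover have "invariant d ?G ?s (?t ` Wm)" by (rule twist[OF n2 iWm])
      ultimately have "?t ` Wm = {0\<^sub>v d} \<or> ?t ` Wm = Wp" using simple_minimal[OF Wp] by blast
      moreover have "?t ` Wm \<noteq> {0\<^sub>v d}" using t0_nz[OF n2 sWm simple_ne[OF Wm]] by auto
      ultimately have "?t ` Wm = Wp" by blast
      hence "?t ` ?t ` Wm = X" unfolding X_def by simp
      thus ?thesis using tt[OF n2 cWm] by simp
    next
      assume h: "X \<inter> Wm = {0\<^sub>v d}"
      have "X \<inter> Wp = {0\<^sub>v d} \<or> X \<inter> Wp = Wp"
        using simple_minimal[OF Wp inv_Int[OF iX iWp]] by blast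
      thus ?thesis
      proof
        assume h2: "X \<inter> Wp = Wp"
        hence tWp: "?t ` Wp \<subseteq> Wp" using tX by blast
        have act: "\<And>i w. i < n \<Longrightarrow> w \<in> Wp \<Longrightarrow> Dgen \<rho> i *\<^sub>v w \<in> Wp"
          using inv_act[OF iWp] Dgens_n[OF n2] by blast
        have "invariant d {..<n} \<rho> Wp"
          unfolding invariant_def
        proof (intro conjI ballI)
          show "subspace_vec d Wp" by (rule sWp)
          fix i v assume i: "i \<in> {..<n}" and v: "v \<in> Wp"
          have vc: "v \<in> carrier_vec d" using cWp v by blast
          consider "i = 0" | "i = 1" | "2 \<le> i" by linarith
          thus "\<rho> i *\<^sub>v v \<in> Wp"
          proof cases
            case 1 thus ?thesis using tWp v by blast
          next
            case 2
            have tv: "?t v \<in> Wp" using tWp v by blast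
            hence "Dgen \<rho> 0 *\<^sub>v ?t v \<in> Wp" using act n2 by simp
            hence "?t (Dgen \<rho> 0 *\<^sub>v ?t v) \<in> Wp" using tWp by blast
            moreover have "?t (Dgen \<rho> 0 *\<^sub>v ?t v) = \<rho> 1 *\<^sub>v v"
              using Dg0[OF n2] vc n2 by (simp add: cv t00)
            ultimately show ?thesis using 2 by simp
          next
            case 3 thus ?thesis using act[of i v] i v Dgi[of i] by simp
          qed
        qed
        moreover have "simple_sub d {..<n} \<rho> (carrier_vec d)"
          using simple unfolding irreducible_rep_def .
        ultimately have "Wp = {0\<^sub>v d} \<or> Wp = carrier_vec d"
          using simple_minimal cWp by blast
        moreover have "Wp \<noteq> {0\<^sub>v d}" using Wp unfolding simple_sub_def by blast
        moreover have "Wm \<noteq> {0\<^sub>v d}" using Wm unfolding simple_sub_def by blast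
        ultimately show ?thesis using disj cWm by blast
      next
        assume h2: "X \<inter> Wp = {0\<^sub>v d}"
        have dec: "\<forall>x\<in>X. \<exists>a\<in>Wp. \<exists>b\<in>Wm. x = a + b" using span cX by blast
        have "module_iso ?G ?s Wp ?s Wm"
          by (rule graph_iso[OF Wp Wm iX rcG h2 h Xne dec])
        thus ?thesis using noniso by blast
      qed
    qed
  qed
  have tWm: "?t ` Wm = Wp" using tX XWm by simp
  let ?L = "Lf (n - 1)" and ?Li = "Li (n - 1)"
  have nk: "n - 1 < n" "1 \<le> n - 1" using n2 by auto
  have LWp: "?L v \<in> Wm" if v: "v \<in> Wp" for v
  proof -
    have "?t (?L v) \<in> Wp" using Y_in[OF n2 iWp nk(2) nk(1) v] .
    hence "?t (?t (?L v)) \<in> X" unfolding X_def by blast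
    thus ?thesis using t00 Lf_car[OF nk(1)] cWp v XWm n2 by auto
  qed
  have LWm: "?L v \<in> Wp" if v: "v \<in> Wm" for v
  proof -
    have "?t (?L v) \<in> Wm" using Y_in[OF n2 iWm nk(2) nk(1) v] .
    hence "?t (?t (?L v)) \<in> Wp" using tWm by blast
    thus ?thesis using t00 Lf_car[OF nk(1)] cWm v n2 by auto
  qed
  have img: "?L ` Wp = Wm"
  proof
    show "?L ` Wp \<subseteq> Wm" using LWp by blast
    show "Wm \<subseteq> ?L ` Wp"
    proof
      fix w assume w: "w \<in> Wm"
      have wc: "w \<in> carrier_vec d" using cWm w by blast
      obtain a b where ab: "a \<in> Wp" "b \<in> Wm" "?Li w = a + b"
        using span Li_car[OF nk(1) wc] by blast
      have ac: "a \<in> carrier_vec d" "b \<in> carrier_vec d" using ab cWp cWm by auto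
      have "w = ?L (?Li w)" using Lf_Li[OF nk(1) wc] by simp
      also have "\<dots> = ?L a + ?L b" using ab(3) Lf_add[OF nk(1) ac] by simp
      finally have weq: "w = ?L a + ?L b" .
      have Lc: "?L a \<in> carrier_vec d" "?L b \<in> carrier_vec d" using Lf_car[OF nk(1)] ac by auto
      have "?L b = w - ?L a" unfolding weq using Lc by (intro eq_vecI) auto
      hence "?L b \<in> Wm" using sub_minus[OF sWm w LWp[OF ab(1)]] by simp
      moreover have "?L b \<in> Wp" using LWm[OF ab(2)] .
      ultimately have "?L b = 0\<^sub>v d" using disj by blast
      hence "w = ?L a" using weq Lc by simp
      thus "w \<in> ?L ` Wp" using ab by blast
    qed
  qed
  have LP: "lp d (Dgens (n - 1)) ?s ?L ?Li"
  proof (intro lp.intro lp0.intro lp_axioms.intro)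
    fix v :: "'k vec" assume "v \<in> carrier_vec d"
    thus "?L v \<in> carrier_vec d" "?Li v \<in> carrier_vec d" "?L (?Li v) = v" "?Li (?L v) = v"
      using Lf_car Li_car Lf_Li nk by auto
  next
    fix u v :: "'k vec" assume "u \<in> carrier_vec d" "v \<in> carrier_vec d"
    thus "?L (u + v) = ?L u + ?L v" using Lf_add nk by auto
  next
    fix c and v :: "'k vec" assume "v \<in> carrier_vec d"
    thus "?L (c \<cdot>\<^sub>v v) = c \<cdot>\<^sub>v ?L v" using Lf_smult nk by auto
  next
    fix i assume "i \<in> Dgens (n - 1)"
    hence "i < n" unfolding Dgens_def by (auto split: if_splits)
    thus "?s i \<in> carrier_mat d d" using Dg_car n2 by auto
  next
    fix i and v :: "'k vec" assume i: "i \<in> Dgens (n - 1)" and v: "v \<in> carrier_vec d"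
    have n3: "3 \<le> n" and iN: "i < n - 1" using i unfolding Dgens_def by (auto split: if_splits)
    show "?L (?s i *\<^sub>v v) = ?s i *\<^sub>v ?L v"
    proof (cases "i = 0")
      case True
      have "?L (?s i *\<^sub>v v) = ?L (\<rho> 0 *\<^sub>v (\<rho> 1 *\<^sub>v (\<rho> 0 *\<^sub>v v)))" using True Dg0[OF n2 v] by simp
      also have "\<dots> = \<rho> 0 *\<^sub>v ?L (\<rho> 1 *\<^sub>v (\<rho> 0 *\<^sub>v v))"
        using C3[OF nk(2) nk(1)] cv v n2 by simp
      also have "\<dots> = \<rho> 0 *\<^sub>v (\<rho> 1 *\<^sub>v ?L (\<rho> 0 *\<^sub>v v))"
        using C4[of 1 "n - 1"] cv v n3 by simp
      also have "\<dots> = \<rho> 0 *\<^sub>v (\<rho> 1 *\<^sub>v (\<rho> 0 *\<^sub>v ?L v))"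
        using C3[OF nk(2) nk(1)] v by simp
      also have "\<dots> = ?s i *\<^sub>v ?L v" using True Dg0[OF n2] Lf_car[OF nk(1) v] by simp
      finally show ?thesis .
    next
      case False
      thus ?thesis using C4[of i "n - 1" v] iN v Dgi[of i] by simp
    qed
  qed
  have "module_iso (Dgens (n - 1)) ?s (socle d (Dgens (n - 1)) ?s Wp) ?s
          (socle d (Dgens (n - 1)) ?s (?L ` Wp))"
    by (rule lp.iso_socle[OF LP cWp])
  thus ?thesis using img by simp
qed

end
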